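(* Let $(\mathcal M,G)$ be a degeneration diagram with associated one-parameter homogeneous deformation $\pi$, general fibre $X_s=X(\mathcal M)$ and special fibre $X_0=X(\mathcal M^{(0)})$, both rational $\mathbb C^*$-surfaces (so that all invariant Weil divisors are Cartier and $\pi_{s,0}$ is defined on all invariant divisors of $X_s$). Then the homomorphism $\pi_{s,0}$ from the group of $\mathbb C^*$-invariant divisors of $X_s$ to that of $X_0$ is given on prime divisors by $$D^{(s)}_\pm\mapsto D^{(0)}_\pm,\qquad D^{(s)}_{v,P}\mapsto D^{(0)}_{v,P}\ (P\in\mathbb P^1\setminus\{0,s\}),$$ $$D^{(s)}_{v_0,0}\mapsto\sum_{\overline{v_0v}\in E(G)}\lambda(v)\,D^{(0)}_{v_0+v,0},\qquad D^{(s)}_{v_s,s}\mapsto\sum_{\overline{vv_s}\in E(G)}\lambda(v)\,D^{(0)}_{v+v_s,0},$$ where $E(G)$ is the edge set of $G$, $v_0$ runs over vertices of $\mathcal M_0$ and $v_s$ over vertices of $\mathcal M_s$.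
   Context: A rational $\mathbb C^*$-surface is a smooth complete rational surface with an effective $\mathbb C^*$-action. A multidivisor $\mathcal M$ on $\mathbb P^1$ consists of, for each $P\in\mathbb P^1$, a polyhedral subdivision $\mathcal M_P$ of $\mathbb Q$ with finitely many rational vertices, all but finitely many $\mathcal M_P$ being the subdivision with the single vertex $0$ (trivial slices), together with $(\mathcal M_-,\mathcal M_+)\in\{\circ,\bullet\}^2$, such that $\sum_P\min(\text{vertices of }\mathcal M_P)<0$ if $\mathcal M_-=\circ$ and $\sum_P\max(\text{vertices of }\mathcal M_P)>0$ if $\mathcal M_+=\circ$. A multidivisor determines a complete normal rational $\mathbb C^*$-surface $X(\mathcal M)$: it is the $T$-variety $X(\Xi)$ (with $N=\mathbb Z$, $T=\mathbb C^*$) for any divisorial fan $\Xi$ on $\mathbb P^1$ with slices $\Xi_P=\mathcal M_P$ which contains a polyhedral divisor with tail cone $\mathbb Q_{\le0}$ (resp. $\mathbb Q_{\ge0}$) and locus all of $\mathbb P^1$ iff $\mathcal M_-=\circ$ (resp. $\mathcal M_+=\circ$); every complete normal rational $\mathbb C^*$-surface arises this way. The invariant prime divisors of $X(\mathcal M)$ are $D_{v,P}$ for $P\in\mathbb P^1$ and $v$ a vertex of $\mathcal M_P$, and $D_-$ (resp. $D_+$) when $\mathcal M_-=\bullet$ (resp. $\mathcal M_+=\bullet$). For $v\in\mathbb Q$, $\lambda(v)$ denotes the denominator of $v$ in lowest terms. Degeneration diagrams. Fix two distinct points $0,s\in\mathbb P^1$. A degeneration diagram $(\mathcal M,G)$ consists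 of a multidivisor $\mathcal M$ and a connected bipartite graph $G$ whose vertex set is the disjoint union of the vertex sets of $\mathcal M_0$ and $\mathcal M_s$ (every edge joins a vertex of $\mathcal M_0$ to a vertex of $\mathcal M_s$), which can be drawn with straight non-crossing edges when $\mathcal M_0$ and $\mathcal M_s$ are placed on two parallel lines, and in which every vertex of degree $>1$ is an integer. Let $\mathcal M^{(0)}$ be the multidivisor with $\mathcal M^{(0)}_\pm=\mathcal M_\pm$, $\mathcal M^{(0)}_P=\mathcal M_P$ for $P\ne0,s$, $\mathcal M^{(0)}_s$ trivial, and $\mathcal M^{(0)}_0$ the subdivision whose vertices are the sums $v_0+v_s$ over edges $\overline{v_0v_s}$ of $G$. The edges of $G$ determine an admissible one-parameter Minkowski decomposition (each coefficient $[v^-,v^+]$ of the slice at $0$ of a divisorial fan for $\mathcal M^{(0)}$ decomposes as $[v_0^-,v_0^+]+[v_s^-,v_s^+]$ with $\overline{v_0^\pm v_s^\pm}$ edges of $G$), hence a one-parameter homogeneous deformation $\pi$ with special fibre $X_0=X(\mathcal M^{(0)})$ and general fibre $X_s=X(\mathcal M)$. Invariant divisors on $X_0$ and $X_s$ are written $D^{(0)}_{v,P},D^{(0)}_\pm$ and $D^{(s)}_{v,P},D^{(s)}_\pm$. The map $\pi_{s,0}$: in general, for a homogeneous deformation of $X(\Xi)$ (Altmann–Hausen divisorial fan $\Xi$ on $\mathbb P^1$, slice decomposition $\mathcal D_0=\mathcal D_0^0+\mathcal D_0^1$), an invariant Cartier divisor on $X_s$ is $D_h$ for a support function $h=\sum_P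 h_P\otimes P$ (continuous functions $h_P$ on the slices, affine on each polyhedron, with common linear part $h^0$), and $\pi_{s,0}(D_h)=D_{h^{(0)}}$ where $h^{(0)}_P=h_P$ for $P\notin\{0,s\}$, $h^{(0)}_s=h^0$, and $h^{(0)}_0(v)=h_0(v_0)+h_s(v_1)$ whenever $v=v_0+v_1$ with $v_0\in\mathcal D_0^0$, $v_1\in\mathcal D_0^1$ for some common $\mathcal D$. The correspondence between support functions and Weil divisors (Petersen–Süß) is: $D_h=-\sum_{P,v}\lambda(v)h_P(v)D_{v,P}-\sum_{\pm}h^0(\pm1)D_\pm$. *)

theory Defs
  imports Complex_Main
begin

text \<open>Points of the projective line P^1 = C \<union> {\<infinity>}; None stands for \<infinity>.\<close>
type_synonym pt = "complex option"

text \<open>A multidivisor: for each point P the vertex set of the subdivision M_P of Q,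
  and the two markers (True = bullet, False = circ) for M_- and M_+.\<close>
record multidiv =
  verts :: "pt \<Rightarrow> rat set"
  minus_bullet :: bool
  plus_bullet :: bool

definition lam :: "rat \<Rightarrow> int" where
  "lam v = snd (quotient_of v)"

definition nontriv :: "multidiv \<Rightarrow> pt set" where
  "nontriv M = {P. verts M P \<noteq> {0}}"

definition vmin :: "multidiv \<Rightarrow> pt \<Rightarrow> rat" where
  "vmin M P = Min (verts M P)"

definition vmax :: "multidiv \<Rightarrow> pt \<Rightarrow> rat" where
  "vmax M P = Max (verts M P)"

definition is_multidiv :: "multidiv \<Rightarrow> bool" where
  "is_multidiv M \<longleftrightarrow>
     (\<forall>P. finite (verts M P) \<and> verts M P \<noteq> {}) \<and> finite (nontriv M) \<and>
     (\<not> minus_bullet M \<longrightarrow> (\<Sum>P\<in>nontriv M. vmin M P) < 0) \<and>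
     (\<not> plus_bullet M \<longrightarrow> (\<Sum>P\<in>nontriv M. vmax M P) > 0)"

text \<open>v < w are adjacent vertices of M_P (they bound a polyhedron of M_P).\<close>
definition adjacent :: "multidiv \<Rightarrow> pt \<Rightarrow> rat \<Rightarrow> rat \<Rightarrow> bool" where
  "adjacent M P v w \<longleftrightarrow> v \<in> verts M P \<and> w \<in> verts M P \<and> v < w \<and>
     (\<forall>u\<in>verts M P. \<not> (v < u \<and> u < w))"

text \<open>Smoothness of X(M) (so that X(M) is a rational C*-surface), via the standard
  local toric charts at the fixed points: hyperbolic fixed points
  D_{v,P} \<inter> D_{w,P}, parabolic fixed points on D_\<plusminus>, and the elliptic fixed
  points x_\<plusminus> when M_\<plusminus> = circ.\<close>
definition smooth_md :: "multidiv \<Rightarrow> bool" where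
  "smooth_md M \<longleftrightarrow>
     (\<forall>P v w. adjacent M P v w \<longrightarrow> of_int (lam v * lam w) * (w - v) = 1) \<and>
     (minus_bullet M \<longrightarrow> (\<forall>P. lam (vmin M P) = 1)) \<and>
     (plus_bullet M \<longrightarrow> (\<forall>P. lam (vmax M P) = 1)) \<and>
     (\<not> minus_bullet M \<longrightarrow>
        card {P. vmin M P \<notin> \<int>} \<le> 2 \<and>
        of_int (\<Prod>P\<in>{P. vmin M P \<notin> \<int>}. lam (vmin M P)) * (\<Sum>P\<in>nontriv M. vmin M P) = -1) \<and>
     (\<not> plus_bullet M \<longrightarrow>
        card {P. vmax M P \<notin> \<int>} \<le> 2 \<and>
        of_int (\<Prod>P\<in>{P. vmax M P \<notin> \<int>}. lam (vmax M P)) * (\<Sum>P\<in>nontriv M. vmax M P) = 1)"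

datatype pdiv = Dv rat pt | Dminus | Dplus

definition prime_divs :: "multidiv \<Rightarrow> pdiv set" where
  "prime_divs M = {Dv v P | v P. v \<in> verts M P} \<union>
     (if minus_bullet M then {Dminus} else {}) \<union> (if plus_bullet M then {Dplus} else {})"

definition ind :: "pdiv \<Rightarrow> pdiv \<Rightarrow> rat" where
  "ind x = (\<lambda>y. if y = x then 1 else 0)"

text \<open>Linear part h^0 of a support function, piecewise linear on the tail fan
  {Q_{\<le>0}, Q_{\<ge>0}}: slope am on Q_{\<le>0}, slope ap on Q_{\<ge>0}.\<close>
definition hlin :: "rat \<Rightarrow> rat \<Rightarrow> rat \<Rightarrow> rat" where
  "hlin am ap x = (if x \<le> 0 then am * x else ap * x)"

text \<open>Cartier support function h = \<Sum> h_P \<otimes> P on the divisorial fan of X(M):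
  on each polyhedron of M_P, h_P is affine with integral slope and integral
  constant term; on the unbounded polyhedra the slope is that of h^0;
  h_P = h^0 for all but finitely many P; and on a polyhedral divisor with
  complete locus P^1 (present iff the marker is circ) h is of the form u + div(f),
  i.e. the constant terms sum to zero.\<close>
definition cartier_supp :: "multidiv \<Rightarrow> (pt \<Rightarrow> rat \<Rightarrow> rat) \<Rightarrow> rat \<Rightarrow> rat \<Rightarrow> bool" where
  "cartier_supp M h am ap \<longleftrightarrow>
     am \<in> \<int> \<and> ap \<in> \<int> \<and>
     (\<forall>P. (\<exists>c\<in>\<int>. \<forall>x. x \<le> vmin M P \<longrightarrow> h P x = am * x + c) \<and>
          (\<exists>c\<in>\<int>. \<forall>x. x \<ge> vmax M P \<longrightarrow> h P x = ap * x + c) \<and>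
          (\<forall>v w. adjacent M P v w \<longrightarrow>
             (\<exists>u\<in>\<int>. \<exists>c\<in>\<int>. \<forall>x. v \<le> x \<and> x \<le> w \<longrightarrow> h P x = u * x + c))) \<and>
     finite {P. h P \<noteq> hlin am ap} \<and>
     (\<not> minus_bullet M \<longrightarrow>
        (\<Sum>P\<in>{P. h P \<noteq> hlin am ap} \<union> nontriv M. h P (vmin M P) - am * vmin M P) = 0) \<and>
     (\<not> plus_bullet M \<longrightarrow>
        (\<Sum>P\<in>{P. h P \<noteq> hlin am ap} \<union> nontriv M. h P (vmax M P) - ap * vmax M P) = 0)"

text \<open>Petersen--Suess: D_h = - \<Sum> lambda(v) h_P(v) D_{v,P} - \<Sum> h^0(\<plusminus>1) D_\<plusminus>
  (divisors as rational-valued functions on prime divisor labels).\<close>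
fun Dh :: "multidiv \<Rightarrow> (pt \<Rightarrow> rat \<Rightarrow> rat) \<Rightarrow> rat \<Rightarrow> rat \<Rightarrow> pdiv \<Rightarrow> rat" where
  "Dh M h am ap (Dv v P) = (if v \<in> verts M P then - of_int (lam v) * h P v else 0)"
| "Dh M h am ap Dminus = (if minus_bullet M then - hlin am ap (-1) else 0)"
| "Dh M h am ap Dplus = (if plus_bullet M then - hlin am ap 1 else 0)"

text \<open>Degeneration diagram (M, G) with respect to the distinct points p0 ("0") and ps ("s");
  G is given by its edge set E \<subseteq> V(M_0) \<times> V(M_s).\<close>
definition degen_diagram :: "multidiv \<Rightarrow> (rat \<times> rat) set \<Rightarrow> pt \<Rightarrow> pt \<Rightarrow> bool" where
  "degen_diagram M E p0 ps \<longleftrightarrow>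
     is_multidiv M \<and> p0 \<noteq> ps \<and>
     E \<subseteq> verts M p0 \<times> verts M ps \<and>
     (let R = {(Inl a, Inr b) | a b. (a, b) \<in> E} \<union> {(Inr b, Inl a) | a b. (a, b) \<in> E};
          VV = Inl ` verts M p0 \<union> Inr ` verts M ps
      in \<forall>x\<in>VV. \<forall>y\<in>VV. (x, y) \<in> R\<^sup>*) \<and>
     (\<forall>a b a' b'. (a, b) \<in> E \<and> (a', b') \<in> E \<and> a < a' \<longrightarrow> b \<le> b') \<and>
     (\<forall>a\<in>verts M p0. card {b. (a, b) \<in> E} > 1 \<longrightarrow> a \<in> \<int>) \<and>
     (\<forall>b\<in>verts M ps. card {a. (a, b) \<in> E} > 1 \<longrightarrow> b \<in> \<int>)"

definition M0 :: "multidiv \<Rightarrow> (rat \<times> rat) set \<Rightarrow> pt \<Rightarrow> pt \<Rightarrow> multidiv" where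
  "M0 M E p0 ps =
     \<lparr> verts = (\<lambda>P. if P = p0 then {a + b | a b. (a, b) \<in> E}
                    else if P = ps then {0} else verts M P),
       minus_bullet = minus_bullet M, plus_bullet = plus_bullet M \<rparr>"

text \<open>The support function h^(0) on X_0 (values needed at vertices).\<close>
definition hpi :: "(rat \<times> rat) set \<Rightarrow> pt \<Rightarrow> pt \<Rightarrow> (pt \<Rightarrow> rat \<Rightarrow> rat) \<Rightarrow> rat \<Rightarrow> rat
    \<Rightarrow> pt \<Rightarrow> rat \<Rightarrow> rat" where
  "hpi E p0 ps h am ap P v =
     (if P = p0 then (let e = (THE e. e \<in> E \<and> fst e + snd e = v) in h p0 (fst e) + h ps (snd e))
      else if P = ps then hlin am ap v else h P v)"

fun pimg :: "(rat \<times> rat) set \<Rightarrow> pt \<Rightarrow> pt \<Rightarrow> pdiv \<Rightarrow> pdiv \<Rightarrow> rat" where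
  "pimg E p0 ps (Dv v P) =
     (if P = p0 then (\<lambda>y. \<Sum>b\<in>{b. (v, b) \<in> E}. of_int (lam b) * ind (Dv (v + b) p0) y)
      else if P = ps then (\<lambda>y. \<Sum>a\<in>{a. (a, v) \<in> E}. of_int (lam a) * ind (Dv (a + v) p0) y)
      else ind (Dv v P))"
| "pimg E p0 ps Dminus = ind Dminus"
| "pimg E p0 ps Dplus = ind Dplus"

end

theory Submission
  imports Defs
begin

lemma quot_add_int: "quotient_of v = (p,q) \<Longrightarrow> quotient_of (v + of_int k) = (p + k*q, q)"
proof -
  assume a: "quotient_of v = (p,q)"
  have q: "q > 0" using quotient_of_denom_pos[OF a] .
  have c: "coprime p q" using quotient_of_coprime[OF a] .
  have c2: "coprime (p + k*q) q"
  proof -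
    have "gcd (p + k*q) q = gcd q (k*q + p)" by (simp add: gcd.commute add.commute)
    also have "\<dots> = gcd q p" by (rule gcd_add_mult)
    finally show ?thesis using c by (simp add: coprime_iff_gcd_eq_1 gcd.commute)
  qed
  have v: "v = Fract p q" using a Fract_quotient_of[of v] by simp
  have "v + of_int k = Fract (fst (p+k*q,q)) (snd (p+k*q,q)) \<and> snd (p+k*q,q) > 0 \<and> coprime (fst (p+k*q,q)) (snd (p+k*q,q))"
    using q c2 by (auto simp: v Fract_of_int_quotient field_simps)
  then show ?thesis unfolding quotient_of_def
    by (rule the1_equality [OF quotient_of_unique])
qed
lemma lam_add_int: "k \<in> \<int> \<Longrightarrow> lam (v + k) = lam v"
  by (cases "quotient_of v") (auto elim!: Ints_cases simp: lam_def quot_add_int)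
lemma lam_int: "k \<in> \<int> \<Longrightarrow> lam k = 1"
  by (auto elim!: Ints_cases simp: lam_def)
lemma lam_one: "lam v = 1 \<Longrightarrow> v \<in> \<int>"
  by (cases "quotient_of v") (auto simp: lam_def dest!: quotient_of_div)
lemma lam_pos: "lam v > 0" by (simp add: lam_def quotient_of_denom_pos')

lemma sum_inj:
  assumes D: "degen_diagram M E p0 ps" and e: "(a,b) \<in> E" "(a',b') \<in> E" and s: "a + b = a' + b'"
  shows "a = a' \<and> b = b'"
proof -
  have nc: "\<forall>a b a' b'. (a, b) \<in> E \<and> (a', b') \<in> E \<and> a < a' \<longrightarrow> b \<le> b'"
    using D unfolding degen_diagram_def by blast
  have "\<not> a < a'" using nc e s by (metis add_less_le_mono less_irrefl)
  moreover have "\<not> a' < a" using nc e s by (metis add_less_le_mono less_irrefl)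
  ultimately show ?thesis using s by auto
qed

lemma smooth_parts:
  assumes "smooth_md M"
  shows "minus_bullet M \<longrightarrow> (\<forall>P. lam (vmin M P) = 1)"
    "plus_bullet M \<longrightarrow> (\<forall>P. lam (vmax M P) = 1)"
    "\<not> minus_bullet M \<longrightarrow>
        card {P. vmin M P \<notin> \<int>} \<le> 2 \<and>
        of_int (\<Prod>P\<in>{P. vmin M P \<notin> \<int>}. lam (vmin M P)) * (\<Sum>P\<in>nontriv M. vmin M P) = -1"
    "\<not> plus_bullet M \<longrightarrow>
        card {P. vmax M P \<notin> \<int>} \<le> 2 \<and>
        of_int (\<Prod>P\<in>{P. vmax M P \<notin> \<int>}. lam (vmax M P)) * (\<Sum>P\<in>nontriv M. vmax M P) = 1"
  using assms unfolding smooth_md_def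
  by (rule conjunct1[OF conjunct2], rule conjunct1[OF conjunct2[OF conjunct2]],
      rule conjunct1[OF conjunct2[OF conjunct2[OF conjunct2]]], rule conjunct2[OF conjunct2[OF conjunct2[OF conjunct2]]])

lemma edge_int:
  assumes D: "degen_diagram M E p0 ps" and S: "smooth_md M" and e: "(a,b) \<in> E"
  shows "a \<in> \<int> \<or> b \<in> \<int>"
proof (rule ccontr)
  assume na: "\<not> (a \<in> \<int> \<or> b \<in> \<int>)"
  hence ai: "a \<notin> \<int>" and bi: "b \<notin> \<int>" by auto
  have md: "is_multidiv M" and ne: "p0 \<noteq> ps" and Esub: "E \<subseteq> verts M p0 \<times> verts M ps"
    using D unfolding degen_diagram_def by auto
  have conn: "\<forall>x\<in>Inl ` verts M p0 \<union> Inr ` verts M ps. \<forall>y\<in>Inl ` verts M p0 \<union> Inr ` verts M ps.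
     (x, y) \<in> ({(Inl a, Inr b) | a b. (a, b) \<in> E} \<union> {(Inr b, Inl a) | a b. (a, b) \<in> E})\<^sup>*"
    using D unfolding degen_diagram_def Let_def by blast
  have dega: "\<forall>a\<in>verts M p0. card {b. (a, b) \<in> E} > 1 \<longrightarrow> a \<in> \<int>"
    and degb: "\<forall>b\<in>verts M ps. card {a. (a, b) \<in> E} > 1 \<longrightarrow> b \<in> \<int>"
    using D unfolding degen_diagram_def by auto
  have fin: "\<And>P. finite (verts M P)" using md unfolding is_multidiv_def by auto
  have av: "a \<in> verts M p0" and bv: "b \<in> verts M ps" using e Esub by auto
  have fa: "finite {b. (a, b) \<in> E}" by (rule finite_subset[OF _ fin[of ps]]) (use Esub in auto)
  have fb: "finite {a. (a, b) \<in> E}" by (rule finite_subset[OF _ fin[of p0]]) (use Esub in auto)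
  have ca: "card {b. (a, b) \<in> E} \<le> Suc 0" using dega av ai by fastforce
  have cb: "card {a. (a, b) \<in> E} \<le> Suc 0" using degb bv bi by fastforce
  have Ea: "\<And>b'. (a,b') \<in> E \<Longrightarrow> b' = b" using ca fa e by (auto simp: card_le_Suc0_iff_eq)
  have Eb: "\<And>a'. (a',b) \<in> E \<Longrightarrow> a' = a" using cb fb e by (auto simp: card_le_Suc0_iff_eq)
  have reach: "y \<in> {Inl a, Inr b}" if "(Inl a, y) \<in> ({(Inl a, Inr b) | a b. (a, b) \<in> E} \<union> {(Inr b, Inl a) | a b. (a, b) \<in> E})\<^sup>*" for y
    using that
  proof (induction rule: rtrancl_induct)
    case base then show ?case by simp
  next
    case (step y z) then show ?case using Ea Eb by auto
  qed
  have V0: "verts M p0 = {a}"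
  proof -
    have "a' = a" if "a' \<in> verts M p0" for a'
    proof -
      have "(Inl a, Inl a') \<in> ({(Inl a, Inr b) | a b. (a, b) \<in> E} \<union> {(Inr b, Inl a) | a b. (a, b) \<in> E})\<^sup>*" by (rule conn[rule_format]) (use av that in auto)
      then have "Inl a' \<in> {Inl a, Inr b}" by (rule reach)
      then show ?thesis by simp
    qed
    then show ?thesis using av by blast
  qed
  have Vs: "verts M ps = {b}"
  proof -
    have "b' = b" if "b' \<in> verts M ps" for b'
    proof -
      have "(Inl a, Inr b') \<in> ({(Inl a, Inr b) | a b. (a, b) \<in> E} \<union> {(Inr b, Inl a) | a b. (a, b) \<in> E})\<^sup>*" by (rule conn[rule_format]) (use av that in auto)
      then have "Inr b' \<in> {Inl a, Inr b}" by (rule reach)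
      then show ?thesis by simp
    qed
    then show ?thesis using bv by blast
  qed
  have m0: "vmin M p0 = a" "vmax M p0 = a" "vmin M ps = b" "vmax M ps = b"
    by (auto simp: vmin_def vmax_def V0 Vs)
  have "minus_bullet M \<Longrightarrow> lam (vmin M p0) = 1" using smooth_parts(1)[OF S] by blast
  hence nmb: "\<not> minus_bullet M" using m0 ai lam_one by auto
  have "plus_bullet M \<Longrightarrow> lam (vmax M p0) = 1" using smooth_parts(2)[OF S] by blast
  hence npb: "\<not> plus_bullet M" using m0 ai lam_one by auto
  have finN: "finite (nontriv M)" using md unfolding is_multidiv_def by auto
  have subN1: "{P. vmin M P \<notin> \<int>} \<subseteq> nontriv M"
    by (auto simp: nontriv_def vmin_def)
  have subN2: "{P. vmax M P \<notin> \<int>} \<subseteq> nontriv M"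
    by (auto simp: nontriv_def vmax_def)
  have f1: "finite {P. vmin M P \<notin> \<int>}" using finite_subset[OF subN1 finN] .
  have f2: "finite {P. vmax M P \<notin> \<int>}" using finite_subset[OF subN2 finN] .
  have sm: "card {P. vmin M P \<notin> \<int>} \<le> 2 \<and>
        of_int (\<Prod>P\<in>{P. vmin M P \<notin> \<int>}. lam (vmin M P)) * (\<Sum>P\<in>nontriv M. vmin M P) = -1"
    and sp: "card {P. vmax M P \<notin> \<int>} \<le> 2 \<and>
        of_int (\<Prod>P\<in>{P. vmax M P \<notin> \<int>}. lam (vmax M P)) * (\<Sum>P\<in>nontriv M. vmax M P) = 1"
    using smooth_parts(3,4)[OF S] nmb npb by blast+
  have S1: "{P. vmin M P \<notin> \<int>} = {p0, ps}"
  proof -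
    have sub: "{p0, ps} \<subseteq> {P. vmin M P \<notin> \<int>}" using m0 ai bi by auto
    have "card {p0, ps} = 2" using ne by simp
    then show ?thesis using card_subset_eq[OF f1 sub] sm card_mono[OF f1 sub] by simp
  qed
  have S2: "{P. vmax M P \<notin> \<int>} = {p0, ps}"
  proof -
    have sub: "{p0, ps} \<subseteq> {P. vmax M P \<notin> \<int>}" using m0 ai bi by auto
    have "card {p0, ps} = 2" using ne by simp
    then show ?thesis using card_subset_eq[OF f2 sub] sp card_mono[OF f2 sub] by simp
  qed
  define L where "L = lam a * lam b"
  have e1: "of_int L * (\<Sum>P\<in>nontriv M. vmin M P) = -1" using sm S1 ne m0 by (simp add: L_def)
  have e2: "of_int L * (\<Sum>P\<in>nontriv M. vmax M P) = 1" using sp S2 ne m0 by (simp add: L_def)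
  have KI: "(\<Sum>P\<in>nontriv M. vmax M P - vmin M P) \<in> \<int>"
  proof (rule Ints_sum)
    fix P assume "P \<in> nontriv M"
    show "vmax M P - vmin M P \<in> \<int>"
    proof (cases "P \<in> {p0, ps}")
      case True then show ?thesis using m0 by auto
    next
      case False
      then have "vmin M P \<in> \<int>" "vmax M P \<in> \<int>" using S1 S2 by blast+
      then show ?thesis by auto
    qed
  qed
  then obtain k where k: "(\<Sum>P\<in>nontriv M. vmax M P - vmin M P) = of_int k" by (auto elim: Ints_cases)
  have "of_int L * of_int k = (2::rat)" using e1 e2 k by (simp add: sum_subtractf algebra_simps)
  hence Lk: "L * k = 2" by (metis of_int_eq_iff of_int_mult of_int_numeral)
  have la: "lam a \<ge> 2" using lam_pos[of a] lam_one[of a] ai by fastforce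
  have lb: "lam b \<ge> 2" using lam_pos[of b] lam_one[of b] bi by fastforce
  have L4: "L \<ge> 4" unfolding L_def using mult_mono[OF la lb] la by simp
  show False
  proof (cases "k \<le> 0")
    case True then have "L * k \<le> 0" using L4 by (simp add: mult_nonneg_nonpos)
    then show False using Lk by simp
  next
    case False then have "L * k \<ge> L * 1" using L4 by (intro mult_left_mono) auto
    then show False using Lk L4 by simp
  qed
qed

lemma lam_edge:
  assumes D: "degen_diagram M E p0 ps" and S: "smooth_md M" and e: "(a,b) \<in> E"
  shows "lam (a + b) = lam a * lam b"
  using edge_int[OF D S e] lam_add_int[of a b] lam_add_int[of b a] lam_int[of a] lam_int[of b]
  by (auto simp: add.commute)

lemma sum_p0:
  assumes fin: "finite {b. (v, b) \<in> E}"
  shows "(\<Sum>b\<in>{b. (v, b) \<in> E}. of_int (lam b) * ind (Dv (v + b) p0) y)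
     = (case y of Dv w P \<Rightarrow> if P = p0 \<and> (v, w - v) \<in> E then of_int (lam (w - v)) else 0 | _ \<Rightarrow> 0)"
proof (cases y)
  case (Dv w P)
  have "(\<Sum>b\<in>{b. (v, b) \<in> E}. of_int (lam b) * ind (Dv (v + b) p0) y)
      = (\<Sum>b\<in>{b. (v, b) \<in> E}. if b = w - v then (if P = p0 then of_int (lam b) else 0) else 0)"
    by (rule sum.cong) (auto simp: ind_def Dv)
  also have "\<dots> = (if w - v \<in> {b. (v, b) \<in> E} then (if P = p0 then of_int (lam (w - v)) else 0) else 0)"
    by (rule sum.delta[OF fin])
  finally show ?thesis using Dv by auto
qed (auto simp: ind_def)

lemma sum_ps:
  assumes fin: "finite {a. (a, v) \<in> E}"
  shows "(\<Sum>a\<in>{a. (a, v) \<in> E}. of_int (lam a) * ind (Dv (a + v) p0) y)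
     = (case y of Dv w P \<Rightarrow> if P = p0 \<and> (w - v, v) \<in> E then of_int (lam (w - v)) else 0 | _ \<Rightarrow> 0)"
proof (cases y)
  case (Dv w P)
  have "(\<Sum>a\<in>{a. (a, v) \<in> E}. of_int (lam a) * ind (Dv (a + v) p0) y)
      = (\<Sum>a\<in>{a. (a, v) \<in> E}. if a = w - v then (if P = p0 then of_int (lam a) else 0) else 0)"
    by (rule sum.cong) (auto simp: ind_def Dv)
  also have "\<dots> = (if w - v \<in> {a. (a, v) \<in> E} then (if P = p0 then of_int (lam (w - v)) else 0) else 0)"
    by (rule sum.delta[OF fin])
  finally show ?thesis using Dv by auto
qed (auto simp: ind_def)

theorem proposition3p8:
  fixes M :: multidiv and E :: "(rat \<times> rat) set" and p0 ps :: pt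
    and h :: "pt \<Rightarrow> rat \<Rightarrow> rat" and am ap :: rat and x :: pdiv
  assumes "degen_diagram M E p0 ps"
    and "smooth_md M"
    and "smooth_md (M0 M E p0 ps)"
    and "x \<in> prime_divs M"
    and "cartier_supp M h am ap"
    and "Dh M h am ap = ind x"
  shows "Dh (M0 M E p0 ps) (hpi E p0 ps h am ap) am ap = pimg E p0 ps x"
proof -
  note D = assms(1) and S = assms(2) and xp = assms(4) and hD = assms(6)
  have md: "is_multidiv M" and ne: "p0 \<noteq> ps" and Esub: "E \<subseteq> verts M p0 \<times> verts M ps"
    using D unfolding degen_diagram_def by auto
  have fin: "\<And>P. finite (verts M P)" using md unfolding is_multidiv_def by auto
  have finA: "\<And>v. finite {b. (v, b) \<in> E}"
    by (rule finite_subset[OF _ fin[of ps]]) (use Esub in auto)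
  have finB: "\<And>v. finite {a. (a, v) \<in> E}"
    by (rule finite_subset[OF _ fin[of p0]]) (use Esub in auto)
  have hv: "h P v = - ind x (Dv v P) / of_int (lam v)" if "v \<in> verts M P" for P v
  proof -
    have "Dh M h am ap (Dv v P) = ind x (Dv v P)" using hD by simp
    then have "- of_int (lam v) * h P v = ind x (Dv v P)" using that by simp
    moreover have "of_int (lam v) \<noteq> (0::rat)" using lam_pos[of v] by simp
    ultimately show ?thesis by (simp add: field_simps)
  qed
  define L where "L = Dh (M0 M E p0 ps) (hpi E p0 ps h am ap) am ap"
  have V0: "verts (M0 M E p0 ps) p0 = {a + b | a b. (a, b) \<in> E}" by (simp add: M0_def)
  have Vs: "verts (M0 M E p0 ps) ps = {0}" using ne by (simp add: M0_def)
  have VP: "P \<noteq> p0 \<Longrightarrow> P \<noteq> ps \<Longrightarrow> verts (M0 M E p0 ps) P = verts M P" for P by (simp add: M0_def)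
  have THE: "(THE e. e \<in> E \<and> fst e + snd e = a + b) = (a, b)" if "(a, b) \<in> E" for a b
  proof (rule the_equality)
    fix e assume "e \<in> E \<and> fst e + snd e = a + b"
    then show "e = (a, b)" using sum_inj[OF D that, of "fst e" "snd e"] by (cases e) auto
  qed (use that in auto)
  have L1: "L (Dv (a + b) p0) = of_int (lam (a + b)) *
      (ind x (Dv a p0) / of_int (lam a) + ind x (Dv b ps) / of_int (lam b))" if ab: "(a, b) \<in> E" for a b
  proof -
    have av: "a \<in> verts M p0" and bv: "b \<in> verts M ps" using ab Esub by auto
    have "L (Dv (a + b) p0) = - of_int (lam (a + b)) * (h p0 a + h ps b)"
      unfolding L_def using ab V0 by (auto simp: hpi_def THE[OF ab] Let_def)
    also have "\<dots> = of_int (lam (a + b)) *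
      (ind x (Dv a p0) / of_int (lam a) + ind x (Dv b ps) / of_int (lam b))"
      using hv[OF av] hv[OF bv] by (simp add: algebra_simps)
    finally show ?thesis .
  qed
  have L2: "L (Dv w p0) = 0" if "\<not> (\<exists>a b. (a, b) \<in> E \<and> w = a + b)" for w
    unfolding L_def using that V0 by auto
  have L3: "L (Dv w ps) = 0" for w
    unfolding L_def using Vs ne by (auto simp: hpi_def lam_int hlin_def)
  have L4: "L (Dv w P) = ind x (Dv w P)" if "P \<noteq> p0" "P \<noteq> ps" for w P
  proof (cases "w \<in> verts M P")
    case True
    then have "L (Dv w P) = Dh M h am ap (Dv w P)" unfolding L_def using that VP by (simp add: hpi_def)
    then show ?thesis using hD by simp
  next
    case False
    then have "L (Dv w P) = 0" unfolding L_def using that VP by simp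
    moreover have "x \<noteq> Dv w P" using xp False by (auto simp: prime_divs_def split: if_splits)
    ultimately show ?thesis by (simp add: ind_def)
  qed
  have L5: "L Dminus = ind x Dminus"
  proof (cases "minus_bullet M")
    case True
    then show ?thesis using hD[THEN fun_cong, of Dminus] unfolding L_def by (simp add: M0_def)
  next
    case False
    then have "x \<noteq> Dminus" using xp by (auto simp: prime_divs_def split: if_splits)
    then show ?thesis using False unfolding L_def by (simp add: M0_def ind_def)
  qed
  have L6: "L Dplus = ind x Dplus"
  proof (cases "plus_bullet M")
    case True
    then show ?thesis using hD[THEN fun_cong, of Dplus] unfolding L_def by (simp add: M0_def)
  next
    case False
    then have "x \<noteq> Dplus" using xp by (auto simp: prime_divs_def split: if_splits)
    then show ?thesis using False unfolding L_def by (simp add: M0_def ind_def)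
  qed
  have "L y = pimg E p0 ps x y" for y
  proof (cases y)
    case Dminus
    then show ?thesis using L5 by (cases x) (auto simp: sum_p0[OF finA] sum_ps[OF finB] ind_def)
  next
    case Dplus
    then show ?thesis using L6 by (cases x) (auto simp: sum_p0[OF finA] sum_ps[OF finB] ind_def)
  next
    case (Dv w P)
    consider (A) "P = p0" | (B) "P = ps" | (C) "P \<noteq> p0" "P \<noteq> ps" by blast
    then show ?thesis
    proof cases
      case B
      then show ?thesis using L3 Dv ne
        by (cases x) (auto simp: sum_p0[OF finA] sum_ps[OF finB] ind_def)
    next
      case C
      then show ?thesis using L4[OF C] Dv
        by (cases x) (auto simp: sum_p0[OF finA] sum_ps[OF finB] ind_def)
    next
      case A
      show ?thesis
      proof (cases "\<exists>a b. (a, b) \<in> E \<and> w = a + b")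
        case False
        then have "L y = 0" using L2 A Dv by simp
        moreover have "pimg E p0 ps x y = 0"
        proof (cases x)
          case (Dv v Q)
          then show ?thesis using False A \<open>y = Dv w P\<close> ne
            by (auto simp: sum_p0[OF finA] sum_ps[OF finB] ind_def)
        qed (use \<open>y = Dv w P\<close> A ne in \<open>auto simp: ind_def\<close>)
        ultimately show ?thesis by simp
      next
        case True
        then obtain a b where ab: "(a, b) \<in> E" and w: "w = a + b" by blast
        have la: "of_int (lam a) \<noteq> (0::rat)" "of_int (lam b) \<noteq> (0::rat)"
          using lam_pos[of a] lam_pos[of b] by auto
        have le: "of_int (lam (a + b)) = (of_int (lam a) * of_int (lam b) :: rat)"
          using lam_edge[OF D S ab] by simp
        have Ly: "L y = of_int (lam (a + b)) *
            (ind x (Dv a p0) / of_int (lam a) + ind x (Dv b ps) / of_int (lam b))"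
          using L1[OF ab] Dv A w by simp
        show ?thesis
        proof (cases x)
          case (Dv v Q)
          consider (Q0) "Q = p0" | (Qs) "Q = ps" | (Qo) "Q \<noteq> p0" "Q \<noteq> ps" by blast
          then show ?thesis
          proof cases
            case Q0
            have R: "pimg E p0 ps x y = (if (v, a + b - v) \<in> E then of_int (lam (a + b - v)) else 0)"
              using Dv Q0 \<open>y = Dv w P\<close> A w by (simp add: sum_p0[OF finA])
            show ?thesis
            proof (cases "v = a")
              case True
              then show ?thesis using R Ly Dv Q0 ab ne la le by (simp add: ind_def)
            next
              case False
              have "(v, a + b - v) \<notin> E" using sum_inj[OF D ab, of v "a + b - v"] False by auto
              then show ?thesis using R Ly Dv Q0 ne False by (simp add: ind_def)
            qed
          next
            case Qs
            have R: "pimg E p0 ps x y = (if (a + b - v, v) \<in> E then of_int (lam (a + b - v)) else 0)"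
              using Dv Qs ne \<open>y = Dv w P\<close> A w by (simp add: sum_ps[OF finB])
            show ?thesis
            proof (cases "v = b")
              case True
              then show ?thesis using R Ly Dv Qs ab ne la le by (simp add: ind_def)
            next
              case False
              have "(a + b - v, v) \<notin> E" using sum_inj[OF D ab, of "a + b - v" v] False by auto
              then show ?thesis using R Ly Dv Qs ne False by (simp add: ind_def)
            qed
          next
            case Qo
            then show ?thesis using Ly Dv \<open>y = Dv w P\<close> A by (simp add: ind_def)
          qed
        qed (use Ly \<open>y = Dv w P\<close> A in \<open>simp_all add: ind_def\<close>)
      qed
    qed
  qed
  then show ?thesis unfolding L_def by auto
qed

end
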